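(* Let $q=2^{v}$ and $s=2^{k}$ with $1\le k\le v$, let $n=(s-1)q+s$, and let $\mathcal{K}$ be a maximal $(n,s)$-arc in $PG(2,q)$. Then $\mathcal{K}$ is an optimal $(1,\mu)$-saturating $n$-set with $\mu=\frac{1}{2}(s-1)n$. Moreover, a linear code $C$ over $\mathbb{F}_q$ corresponding to $\mathcal{K}$ is an $[n,n-3]_q$ code with covering radius $2$, and $C$ is a $(2,\mu)$-PMCF code if $s=2$ and a $(2,\mu)$-APMCF code if $s\ge 4$.
   Context: $PG(N,q)$ is the $N$-dimensional projective space over $\mathbb{F}_q$. A maximal $(n,s)$-arc in $PG(2,q)$ is a set of $n$ points such that every line meets it in either $0$ or $s$ points. For a point set $S$, a secant of $S$ is a line $\ell$ with $|\ell\cap S|\ge2$, counted with multiplicity $\binom{|\ell\cap S|}{2}$. A set $S$ of $n$ points of $PG(N,q)$ is a $(1,\mu)$-saturating $n$-set if (M1) $S$ spans $PG(N,q)$, (M2) $S\neq PG(N,q)$, and (M3) every point $Q\notin S$ lies on secants of $S$ whose multiplicities sum to at least $\mu$; it is optimal if for every $Q\notin S$ this sum is exactly $\mu$. A linear code of length $n$ over $\mathbb{F}_q$ corresponds to $S=\{P_1,\dots,P_n\}\subset PG(N,q)$ if it has a parity-check matrix whose $i$-th column is a homogeneous coordinate vector of $P_i$. An $[n,k]_q$ code is a linear code of length $n$ and dimension $k$; its covering radius $R$ is $\max_{x\in\mathbb{F}_q^n} d(x,C)$ (Hamming distance), and $d(C)$ is its minimum distance. A code $C$ with covering radius $R$ is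 an $(R,\mu)$-APMCF code if every $x\in\mathbb{F}_q^n$ with $d(x,C)=R$ is at distance exactly $R$ from exactly $\mu$ codewords; it is an $(R,\mu)$-PMCF code if in addition $d(C)\ge 2R$. *)

theory Defs
  imports "HOL-Analysis.Analysis" "HOL-Library.Function_Algebras"
begin

definition pg_point :: "'a::field ^ 3 \<Rightarrow> ('a ^ 3) set" where
  "pg_point x = {c *s x | c. c \<noteq> 0}"

definition pg_points :: "('a::field ^ 3) set set" where
  "pg_points = {pg_point x | x. x \<noteq> 0}"

definition dot3 :: "'a::field ^ 3 \<Rightarrow> 'a ^ 3 \<Rightarrow> 'a" where
  "dot3 a x = (\<Sum>i\<in>UNIV. a $ i * x $ i)"

definition pg_line :: "'a::field ^ 3 \<Rightarrow> ('a ^ 3) set set" where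
  "pg_line a = {P \<in> pg_points. \<forall>x\<in>P. dot3 a x = 0}"

definition pg_lines :: "('a::field ^ 3) set set set" where
  "pg_lines = {pg_line a | a. a \<noteq> 0}"

definition maximal_arc :: "('a::field ^ 3) set set \<Rightarrow> nat \<Rightarrow> nat \<Rightarrow> bool" where
  "maximal_arc K n s \<longleftrightarrow> K \<subseteq> pg_points \<and> finite K \<and> card K = n \<and>
     (\<forall>l\<in>pg_lines. card (l \<inter> K) = 0 \<or> card (l \<inter> K) = s)"

definition pg_spans :: "('a::field ^ 3) set set \<Rightarrow> bool" where
  "pg_spans S \<longleftrightarrow> (\<forall>y::'a^3. \<exists>X c. finite X \<and> X \<subseteq> \<Union>S \<and> y = (\<Sum>x\<in>X. c x *s x))"

definition secant_mult :: "('a::field ^ 3) set set \<Rightarrow> ('a ^ 3) set \<Rightarrow> nat" where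
  "secant_mult S Q = (\<Sum>l\<in>{l\<in>pg_lines. Q \<in> l \<and> card (l \<inter> S) \<ge> 2}. card (l \<inter> S) choose 2)"

definition saturating_1_mu :: "('a::field ^ 3) set set \<Rightarrow> nat \<Rightarrow> nat \<Rightarrow> bool" where
  "saturating_1_mu S mu n \<longleftrightarrow> S \<subseteq> pg_points \<and> finite S \<and> card S = n \<and>
     pg_spans S \<and> S \<noteq> pg_points \<and> (\<forall>Q\<in>pg_points - S. secant_mult S Q \<ge> mu)"

definition optimal_saturating_1_mu :: "('a::field ^ 3) set set \<Rightarrow> nat \<Rightarrow> nat \<Rightarrow> bool" where
  "optimal_saturating_1_mu S mu n \<longleftrightarrow> saturating_1_mu S mu n \<and>
     (\<forall>Q\<in>pg_points - S. secant_mult S Q = mu)"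

definition words :: "nat \<Rightarrow> (nat \<Rightarrow> 'a::zero) set" where
  "words n = {x. \<forall>i\<ge>n. x i = 0}"

definition hamming :: "nat \<Rightarrow> (nat \<Rightarrow> 'a) \<Rightarrow> (nat \<Rightarrow> 'a) \<Rightarrow> nat" where
  "hamming n x y = card {i. i < n \<and> x i \<noteq> y i}"

definition wscale :: "'a::field \<Rightarrow> (nat \<Rightarrow> 'a) \<Rightarrow> (nat \<Rightarrow> 'a)" where
  "wscale c x = (\<lambda>i. c * x i)"

definition code_dim :: "(nat \<Rightarrow> 'a::field) set \<Rightarrow> nat" where
  "code_dim C = vector_space.dim wscale C"

text \<open>The code with parity-check matrix whose i-th column is h i (i < n).\<close>
definition parity_code :: "nat \<Rightarrow> (nat \<Rightarrow> 'a::field ^ 3) \<Rightarrow> (nat \<Rightarrow> 'a) set" where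
  "parity_code n h = {x \<in> words n. (\<Sum>i<n. x i *s h i) = 0}"

definition corresponds :: "nat \<Rightarrow> (nat \<Rightarrow> 'a::field ^ 3) \<Rightarrow> ('a ^ 3) set set \<Rightarrow> bool" where
  "corresponds n h S \<longleftrightarrow> (\<forall>i<n. h i \<noteq> 0) \<and> bij_betw (\<lambda>i. pg_point (h i)) {..<n} S"

definition dist_to_code :: "nat \<Rightarrow> (nat \<Rightarrow> 'a) set \<Rightarrow> (nat \<Rightarrow> 'a) \<Rightarrow> nat" where
  "dist_to_code n C x = Min (hamming n x ` C)"

definition covering_radius :: "nat \<Rightarrow> (nat \<Rightarrow> 'a::zero) set \<Rightarrow> nat" where
  "covering_radius n C = Max (dist_to_code n C ` words n)"

definition min_distance :: "nat \<Rightarrow> (nat \<Rightarrow> 'a) set \<Rightarrow> nat" where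
  "min_distance n C = Min {hamming n c c' | c c'. c \<in> C \<and> c' \<in> C \<and> c \<noteq> c'}"

definition APMCF :: "nat \<Rightarrow> (nat \<Rightarrow> 'a::zero) set \<Rightarrow> nat \<Rightarrow> nat \<Rightarrow> bool" where
  "APMCF n C R mu \<longleftrightarrow> covering_radius n C = R \<and>
     (\<forall>x\<in>words n. dist_to_code n C x = R \<longrightarrow> card {c\<in>C. hamming n x c = R} = mu)"

definition PMCF :: "nat \<Rightarrow> (nat \<Rightarrow> 'a::zero) set \<Rightarrow> nat \<Rightarrow> nat \<Rightarrow> bool" where
  "PMCF n C R mu \<longleftrightarrow> APMCF n C R mu \<and> min_distance n C \<ge> 2 * R"

end

theory Submission
  imports Defs
begin


definition cross :: "'a::field^3 \<Rightarrow> 'a^3 \<Rightarrow> 'a^3" where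
 "cross x y = vector [x$2*y$3 - x$3*y$2, x$3*y$1 - x$1*y$3, x$1*y$2 - x$2*y$1]"

lemma cross_nth[simp]:
  "cross x y $ 1 = x$2*y$3 - x$3*y$2"
  "cross x y $ 2 = x$3*y$1 - x$1*y$3"
  "cross x y $ 3 = x$1*y$2 - x$2*y$1"
  by (simp_all add: cross_def)

lemma dot3_expand: "dot3 a x = a$1*x$1 + a$2*x$2 + a$3*x$3"
  by (simp add: dot3_def sum_3)

lemma vec3_eq: "(x::'a^3) = y \<longleftrightarrow> x$1=y$1 \<and> x$2=y$2 \<and> x$3=y$3"
  by (simp add: vec_eq_iff forall_3)

lemma dot3_lin:
  "dot3 a (c *s x) = c * dot3 a x"
  "dot3 (c *s a) x = c * dot3 a x"
  "dot3 a (x + y) = dot3 a x + dot3 a y"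
  "dot3 a (x - y) = dot3 a x - dot3 a y"
  "dot3 a 0 = 0"
  by (simp_all add: dot3_expand algebra_simps)

lemma cramer:
  "dot3 (cross x1 x2) x3 *s y = dot3 (cross y x2) x3 *s x1 + dot3 (cross x1 y) x3 *s x2 + dot3 (cross x1 x2) y *s x3"
  by (simp add: vec3_eq dot3_expand algebra_simps)

lemma lagrange: "cross (cross x y) a = dot3 a x *s y - dot3 a y *s x"
  by (simp add: vec3_eq dot3_expand algebra_simps)

lemma det_rep[simp]: "dot3 (cross x y) x = 0" "dot3 (cross x y) y = 0"
  by (simp_all add: dot3_expand algebra_simps)

lemma det_cyc: "dot3 (cross x y) z = dot3 (cross y z) x"
  by (simp add: dot3_expand algebra_simps)

lemma cross_zero_imp:
  fixes x y :: "'a::field^3"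
  assumes "x \<noteq> 0" "cross x y = 0" shows "\<exists>c. y = c *s x"
proof -
  have e: "x$1*y$2 = x$2*y$1" "x$3*y$1 = x$1*y$3" "x$2*y$3 = x$3*y$2"
    using assms(2) by (simp_all add: vec3_eq)
  from assms(1) have "x$1 \<noteq> 0 \<or> x$2 \<noteq> 0 \<or> x$3 \<noteq> 0" by (simp add: vec3_eq)
  then show ?thesis
  proof (elim disjE)
    assume h: "x$1 \<noteq> 0"
    show ?thesis by (rule exI[of _ "y$1/x$1"]) (use h e in \<open>simp add: vec3_eq field_simps\<close>)
  next
    assume h: "x$2 \<noteq> 0"
    show ?thesis by (rule exI[of _ "y$2/x$2"]) (use h e in \<open>simp add: vec3_eq field_simps\<close>)
  next
    assume h: "x$3 \<noteq> 0"
    show ?thesis by (rule exI[of _ "y$3/x$3"]) (use h e in \<open>simp add: vec3_eq field_simps\<close>)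
  qed
qed

lemma pg_point_mem: "x \<noteq> 0 \<Longrightarrow> x \<in> pg_point x"
  unfolding pg_point_def by (rule CollectI, rule exI[of _ 1]) simp

lemma pg_point_zero: "x \<noteq> 0 \<Longrightarrow> (0::'a::field^3) \<notin> pg_point x"
  unfolding pg_point_def by auto

lemma pg_point_in: "x \<noteq> 0 \<Longrightarrow> pg_point x \<in> pg_points"
  unfolding pg_points_def by auto

lemma pg_point_eq:
  fixes x y :: "'a::field^3"
  assumes "x \<noteq> 0" "y \<noteq> 0"
  shows "pg_point x = pg_point y \<longleftrightarrow> (\<exists>c. c \<noteq> 0 \<and> y = c *s x)"
proof
  assume "pg_point x = pg_point y"
  then have "y \<in> pg_point x" using pg_point_mem[OF assms(2)] by simp
  then show "\<exists>c. c \<noteq> 0 \<and> y = c *s x" unfolding pg_point_def by auto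
next
  assume "\<exists>c. c \<noteq> 0 \<and> y = c *s x"
  then obtain c where c: "c \<noteq> 0" "y = c *s x" by blast
  show "pg_point x = pg_point y"
  proof (rule set_eqI)
    fix z
    show "z \<in> pg_point x \<longleftrightarrow> z \<in> pg_point y"
    proof
      assume "z \<in> pg_point x"
      then obtain d where "d \<noteq> 0" "z = d *s x" unfolding pg_point_def by auto
      then have "z = (d / c) *s y" "d / c \<noteq> 0" using c by (auto simp: vector_smult_assoc)
      then show "z \<in> pg_point y" unfolding pg_point_def by blast
    next
      assume "z \<in> pg_point y"
      then obtain d where "d \<noteq> 0" "z = d *s y" unfolding pg_point_def by auto
      then have "z = (d * c) *s x" "d * c \<noteq> 0" using c by (auto simp: vector_smult_assoc)
      then show "z \<in> pg_point x" unfolding pg_point_def by blast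
    qed
  qed
qed

lemma pg_pointsE:
  assumes "P \<in> pg_points" obtains x where "x \<noteq> 0" "P = pg_point x"
  using assms unfolding pg_points_def by auto

lemma in_line:
  fixes x :: "'a::field^3"
  assumes "x \<noteq> 0" shows "pg_point x \<in> pg_line a \<longleftrightarrow> dot3 a x = 0"
proof
  assume "pg_point x \<in> pg_line a"
  then show "dot3 a x = 0" using pg_point_mem[OF assms] unfolding pg_line_def by auto
next
  assume h: "dot3 a x = 0"
  have "\<forall>z\<in>pg_point x. dot3 a z = 0" unfolding pg_point_def using h by (auto simp: dot3_lin)
  then show "pg_point x \<in> pg_line a" unfolding pg_line_def using pg_point_in[OF assms] by auto
qed

lemma line_scale: "c \<noteq> 0 \<Longrightarrow> pg_line (c *s a) = pg_line (a::'a::field^3)"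
  unfolding pg_line_def by (auto simp: dot3_lin)

lemma line_points: "l \<in> pg_lines \<Longrightarrow> l \<subseteq> pg_points"
  unfolding pg_lines_def pg_line_def by auto

lemma cross_nonzero:
  fixes x y :: "'a::field^3"
  assumes "x \<noteq> 0" "y \<noteq> 0" "pg_point x \<noteq> pg_point y"
  shows "cross x y \<noteq> 0"
proof
  assume "cross x y = 0"
  then obtain c where c: "y = c *s x" using cross_zero_imp assms by blast
  then have "c \<noteq> 0" using assms(2) by auto
  then show False using assms pg_point_eq c by blast
qed

lemma line_through:
  fixes x y :: "'a::field^3"
  assumes "x \<noteq> 0" "y \<noteq> 0" "pg_point x \<noteq> pg_point y"
  shows "pg_line (cross x y) \<in> pg_lines" "pg_point x \<in> pg_line (cross x y)" "pg_point y \<in> pg_line (cross x y)"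
  using cross_nonzero[OF assms] assms by (auto simp: pg_lines_def in_line)

lemma line_unique:
  fixes x y :: "'a::field^3"
  assumes "x \<noteq> 0" "y \<noteq> 0" "pg_point x \<noteq> pg_point y"
    and "l \<in> pg_lines" "pg_point x \<in> l" "pg_point y \<in> l"
  shows "l = pg_line (cross x y)"
proof -
  obtain a where a: "a \<noteq> 0" "l = pg_line a" using assms(4) unfolding pg_lines_def by auto
  have d: "dot3 a x = 0" "dot3 a y = 0" using assms(5,6) a in_line assms(1,2) by auto
  have "cross (cross x y) a = 0" using lagrange[of x y a] d by simp
  then obtain c where c: "a = c *s cross x y" using cross_zero_imp cross_nonzero[OF assms(1-3)] by blast
  then have "c \<noteq> 0" using a by auto
  then show ?thesis using a c line_scale by simp
qed

lemma two_lines: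
  assumes "l1 \<in> pg_lines" "l2 \<in> pg_lines" "P \<in> l1" "P \<in> l2" "Q \<in> l1" "Q \<in> l2" "P \<noteq> Q"
  shows "l1 = (l2 :: ('a::field^3) set set)"
proof -
  have "P \<in> pg_points" "Q \<in> pg_points" using assms line_points by blast+
  then obtain x y where "x \<noteq> 0" "P = pg_point x" "y \<noteq> 0" "Q = pg_point y" by (metis pg_pointsE)
  then show ?thesis using line_unique assms by metis
qed

lemma line_exists:
  assumes "P \<in> pg_points" "Q \<in> pg_points" "P \<noteq> Q"
  shows "\<exists>l\<in>pg_lines. P \<in> l \<and> Q \<in> (l :: ('a::field^3) set set)"
proof -
  obtain x y where "x \<noteq> 0" "P = pg_point x" "y \<noteq> 0" "Q = pg_point y" using assms by (metis pg_pointsE)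
  then show ?thesis using line_through assms by metis
qed

lemma secant_decomp:
  fixes x1 x2 y :: "'a::field^3"
  assumes "x1 \<noteq> 0" "x2 \<noteq> 0" "pg_point x1 \<noteq> pg_point x2" "dot3 (cross x1 x2) y = 0"
  shows "\<exists>\<alpha> \<beta>. y = \<alpha> *s x1 + \<beta> *s x2"
proof -
  have "cross x1 x2 \<noteq> 0" using cross_nonzero assms by blast
  then obtain i where i: "cross x1 x2 $ i \<noteq> 0" by (auto simp: vec_eq_iff)
  define e :: "'a^3" where "e = axis i 1"
  have de: "dot3 (cross x1 x2) e = cross x1 x2 $ i"
    unfolding dot3_def e_def axis_def by (simp add: if_distrib cong: if_cong)
  have "dot3 (cross x1 x2) e *s y = dot3 (cross y x2) e *s x1 + dot3 (cross x1 y) e *s x2"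
    using cramer[of x1 x2 e y] assms(4) by simp
  then have "y = (dot3 (cross y x2) e / cross x1 x2 $ i) *s x1 + (dot3 (cross x1 y) e / cross x1 x2 $ i) *s x2"
    using i de by (simp add: vec_eq_iff field_simps)
  then show ?thesis by blast
qed

lemma arc_line_card:
  assumes "maximal_arc K n s" "l \<in> pg_lines" "card (l \<inter> K) \<ge> 2" "2 \<le> s"
  shows "card (l \<inter> K) = s"
  using assms unfolding maximal_arc_def by force

lemma sat_count:
  fixes K :: "('a::{field,finite}^3) set set"
  assumes arc: "maximal_arc K n s" and s2: "2 \<le> s" and Q: "Q \<in> pg_points" "Q \<notin> K"
  defines "L \<equiv> {l\<in>pg_lines. Q \<in> l \<and> card (l \<inter> K) \<ge> 2}"
  shows "card L * s = n" "secant_mult K Q = card L * (s choose 2)"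
proof -
  have Kp: "K \<subseteq> pg_points" "card K = n" using arc unfolding maximal_arc_def by auto
  have cs: "\<And>l. l \<in> L \<Longrightarrow> card (l \<inter> K) = s" using arc_line_card[OF arc _ _ s2] unfolding L_def by auto
  have KU: "K = (\<Union>l\<in>L. l \<inter> K)"
  proof
    show "K \<subseteq> (\<Union>l\<in>L. l \<inter> K)"
    proof
      fix P assume P: "P \<in> K"
      then have "P \<noteq> Q" using Q by auto
      then obtain l where l: "l \<in> pg_lines" "P \<in> l" "Q \<in> l" using line_exists[of P Q] P Kp Q by auto
      then have "card (l \<inter> K) \<noteq> 0" using P by auto
      then have "card (l \<inter> K) = s" using arc l(1) unfolding maximal_arc_def by auto
      then have "l \<in> L" using l s2 unfolding L_def by auto
      then show "P \<in> (\<Union>l\<in>L. l \<inter> K)" using l P by auto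
    qed
  qed auto
  have disj: "\<forall>l1\<in>L. \<forall>l2\<in>L. l1 \<noteq> l2 \<longrightarrow> (l1 \<inter> K) \<inter> (l2 \<inter> K) = {}"
  proof (intro ballI impI)
    fix l1 l2 assume h: "l1 \<in> L" "l2 \<in> L" "l1 \<noteq> l2"
    show "(l1 \<inter> K) \<inter> (l2 \<inter> K) = {}"
    proof (rule ccontr)
      assume "(l1 \<inter> K) \<inter> (l2 \<inter> K) \<noteq> {}"
      then obtain P where "P \<in> l1" "P \<in> l2" "P \<in> K" by auto
      then show False using two_lines[of l1 l2 P Q] h Q unfolding L_def by auto
    qed
  qed
  have "card K = (\<Sum>l\<in>L. card (l \<inter> K))"
    by (subst KU, rule card_UN_disjoint) (use disj in auto)
  also have "\<dots> = (\<Sum>l\<in>L. s)" using cs by simp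
  finally show "card L * s = n" using Kp by simp
  have "secant_mult K Q = (\<Sum>l\<in>L. card (l \<inter> K) choose 2)"
    unfolding secant_mult_def L_def by (rule sum.cong) auto
  also have "\<dots> = (\<Sum>l\<in>L. s choose 2)" using cs by simp
  finally show "secant_mult K Q = card L * (s choose 2)" by simp
qed

lemma mu_arith:
  assumes "even s" "m * s = n"
  shows "m * (s choose 2) = ((s - 1) * n) div 2"
proof -
  obtain t where t: "s = 2 * t" using assms(1) by auto
  have a: "s * (s - 1) = 2 * (t * (s - 1))" using t by simp
  have b: "(s - 1) * n = 2 * (m * (t * (s - 1)))" using t assms(2)[symmetric] by simp
  show ?thesis unfolding choose_two a b by simp
qed

lemma line_big: "\<exists>l\<in>(pg_lines :: ('a::{field,finite}^3) set set set). CARD('a) + 1 \<le> card l"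
proof -
  define a :: "'a^3" where "a = vector [0,0,1]"
  define f :: "'a \<Rightarrow> ('a^3) set" where "f t = pg_point (vector [1,t,0])" for t
  define P0 :: "('a^3) set" where "P0 = pg_point (vector [0,1,0])"
  have nz: "(vector [1,t,0] :: 'a^3) \<noteq> 0" for t by (simp add: vec3_eq)
  have nz0: "(vector [0,1,0] :: 'a^3) \<noteq> 0" by (simp add: vec3_eq)
  have inj: "inj f"
  proof
    fix t t' assume "f t = f t'"
    then obtain c where "c \<noteq> 0" "(vector [1,t',0] :: 'a^3) = c *s vector [1,t,0]"
      using pg_point_eq[OF nz nz] unfolding f_def by blast
    then show "t = t'" by (simp add: vec3_eq)
  qed
  have P0n: "P0 \<notin> range f"
  proof
    assume "P0 \<in> range f"
    then obtain t where "P0 = f t" by auto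
    then obtain c where "c \<noteq> 0" "(vector [0,1,0] :: 'a^3) = c *s vector [1,t,0]"
      using pg_point_eq[OF nz nz0] unfolding f_def P0_def by metis
    then show False by (simp add: vec3_eq)
  qed
  have sub: "insert P0 (range f) \<subseteq> pg_line a"
    using nz nz0 unfolding f_def P0_def a_def by (auto simp: in_line dot3_expand)
  have "card (insert P0 (range f)) = CARD('a) + 1"
    using P0n inj by (simp add: card_image)
  moreover have "pg_line a \<in> pg_lines" unfolding pg_lines_def a_def by (auto simp: vec3_eq)
  ultimately show ?thesis using card_mono[OF _ sub] by (metis finite)
qed

lemma arc_ne:
  fixes K :: "('a::{field,finite}^3) set set"
  assumes "maximal_arc K n s" "s \<le> CARD('a)"
  shows "K \<noteq> pg_points"
proof
  assume KP: "K = pg_points"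
  obtain l :: "('a^3) set set" where l: "l \<in> pg_lines" "CARD('a) + 1 \<le> card l" using line_big by blast
  have "l \<inter> K = l" using line_points[OF l(1)] KP by auto
  then have c: "card (l \<inter> K) = card l" by simp
  have "card (l \<inter> K) = 0 \<or> card (l \<inter> K) = s" using assms(1) l(1) unfolding maximal_arc_def by blast
  then show False using c l(2) assms(2) by linarith
qed

lemma secant_through:
  fixes K :: "('a::{field,finite}^3) set set"
  assumes arc: "maximal_arc K n s" and s2: "2 \<le> s" and ne: "K \<noteq> {}"
    and y: "y \<noteq> 0" "pg_point y \<notin> K"
  shows "\<exists>x1 x2 \<alpha> \<beta>. x1 \<noteq> 0 \<and> x2 \<noteq> 0 \<and> pg_point x1 \<in> K \<and> pg_point x2 \<in> K \<and>
     pg_point x1 \<noteq> pg_point x2 \<and> y = \<alpha> *s x1 + \<beta> *s x2"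
proof -
  have Kp: "K \<subseteq> pg_points" using arc unfolding maximal_arc_def by auto
  obtain P where P: "P \<in> K" using ne by auto
  have "P \<noteq> pg_point y" using P y by auto
  then obtain l where l: "l \<in> pg_lines" "P \<in> l" "pg_point y \<in> l"
    using line_exists[of P "pg_point y"] P Kp pg_point_in[OF y(1)] by auto
  then have "card (l \<inter> K) \<noteq> 0" using P by auto
  then have "card (l \<inter> K) = s" using arc l(1) unfolding maximal_arc_def by auto
  then have "card (l \<inter> K) \<ge> 2" using s2 by simp
  moreover have "(l \<inter> K) - {P} \<noteq> {}"
  proof
    assume "(l \<inter> K) - {P} = {}"
    then have "l \<inter> K \<subseteq> {P}" by auto
    then have "card (l \<inter> K) \<le> 1" using card_mono[of "{P}"] by fastforce
    then show False using \<open>card (l \<inter> K) \<ge> 2\<close> by simp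
  qed
  ultimately obtain P' where P': "P' \<in> l \<inter> K" "P' \<noteq> P" by auto
  have "P \<in> pg_points" "P' \<in> pg_points" using P P' Kp by auto
  obtain x1 where x1: "x1 \<noteq> 0" "P = pg_point x1" using \<open>P \<in> pg_points\<close> by (rule pg_pointsE)
  obtain x2 where x2: "x2 \<noteq> 0" "P' = pg_point x2" using \<open>P' \<in> pg_points\<close> by (rule pg_pointsE)
  have "l = pg_line (cross x1 x2)" using line_unique[OF x1(1) x2(1)] x1 x2 P' l by auto
  then have "dot3 (cross x1 x2) y = 0" using l(3) in_line y(1) by auto
  then obtain \<alpha> \<beta> where "y = \<alpha> *s x1 + \<beta> *s x2" using secant_decomp[of x1 x2 y] x1 x2 P' by auto
  then show ?thesis using x1 x2 P P' by blast
qed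

lemma arc_spans:
  fixes K :: "('a::{field,finite}^3) set set"
  assumes arc: "maximal_arc K n s" and s2: "2 \<le> s" and ne: "K \<noteq> {}"
  shows "pg_spans K"
  unfolding pg_spans_def
proof
  fix y :: "'a^3"
  show "\<exists>X c. finite X \<and> X \<subseteq> \<Union> K \<and> y = (\<Sum>x\<in>X. c x *s x)"
  proof (cases "y = 0")
    case True then show ?thesis by (intro exI[of _ "{}"]) auto
  next
    case yn: False
    show ?thesis
    proof (cases "pg_point y \<in> K")
      case True
      then show ?thesis using pg_point_mem[OF yn]
        by (intro exI[of _ "{y}"] exI[of _ "\<lambda>_. 1"]) auto
    next
      case False
      then obtain x1 x2 \<alpha> \<beta> where h: "x1 \<noteq> 0" "x2 \<noteq> 0" "pg_point x1 \<in> K" "pg_point x2 \<in> K"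
        "pg_point x1 \<noteq> pg_point x2" "y = \<alpha> *s x1 + \<beta> *s x2"
        using secant_through[OF arc s2 ne yn] by blast
      then have "x1 \<noteq> x2" by auto
      then show ?thesis using h pg_point_mem[OF h(1)] pg_point_mem[OF h(2)]
        by (intro exI[of _ "{x1,x2}"] exI[of _ "\<lambda>z. if z = x1 then \<alpha> else \<beta>"]) auto
    qed
  qed
qed



definition syn :: "nat \<Rightarrow> (nat \<Rightarrow> 'a::field^3) \<Rightarrow> (nat \<Rightarrow> 'a) \<Rightarrow> 'a^3" where
  "syn n h e = (\<Sum>i<n. e i *s h i)"

definition supp :: "nat \<Rightarrow> (nat \<Rightarrow> 'a::zero) \<Rightarrow> nat set" where
  "supp n e = {i. i < n \<and> e i \<noteq> 0}"

definition delta :: "nat \<Rightarrow> 'a::zero \<Rightarrow> nat \<Rightarrow> 'a" where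
  "delta i a = (\<lambda>j. if j = i then a else 0)"

lemma sum_fun_apply: "(\<Sum>j\<in>A. f j) k = (\<Sum>j\<in>A. f j k)"
  by (induct A rule: infinite_finite_induct) auto

lemma finite_supp[simp]: "finite (supp n e)" unfolding supp_def by auto

lemma supp_sub: "supp n e \<subseteq> {..<n}" unfolding supp_def by auto

lemma hamming_supp: "hamming n x y = card (supp n (x - (y::nat \<Rightarrow> 'a::ab_group_add)))"
  unfolding hamming_def supp_def by simp

lemma words_diff: "(x::nat \<Rightarrow> 'a::ab_group_add) \<in> words n \<Longrightarrow> y \<in> words n \<Longrightarrow> x - y \<in> words n"
  unfolding words_def by auto
lemma words_add: "(x::nat \<Rightarrow> 'a::ab_group_add) \<in> words n \<Longrightarrow> y \<in> words n \<Longrightarrow> x + y \<in> words n"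
  unfolding words_def by auto
lemma words_scale: "x \<in> words n \<Longrightarrow> wscale c x \<in> words n"
  unfolding words_def wscale_def by auto
lemma words_zero[simp]: "0 \<in> words n"
  unfolding words_def by auto
lemma words_delta: "i < n \<Longrightarrow> delta i a \<in> words n"
  unfolding words_def delta_def by auto

lemma words_supp_zero:
  assumes "x \<in> words n" "supp n x = {}" shows "x = 0"
proof
  fix i show "x i = 0 i"
  proof (cases "i < n")
    case True then show ?thesis using assms(2) unfolding supp_def by auto
  next
    case False then show ?thesis using assms(1) unfolding words_def by simp
  qed
qed

lemma finite_words: "finite (words n :: (nat \<Rightarrow> 'a::{zero,finite}) set)"
proof -
  define g :: "(nat \<Rightarrow> 'a) \<Rightarrow> (nat \<Rightarrow> 'a)" where "g x = restrict x {..<n}" for x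
  have "inj_on g (words n)"
  proof
    fix x y assume x: "x \<in> words n" and y: "y \<in> words n" and e: "g x = g y"
    show "x = y"
    proof
      fix i
      show "x i = y i"
      proof (cases "i < n")
        case True
        then show ?thesis using fun_cong[OF e, of i] unfolding g_def by simp
      next
        case False
        then show ?thesis using x y unfolding words_def by simp
      qed
    qed
  qed
  moreover have "g ` words n \<subseteq> PiE {..<n} (\<lambda>_. UNIV)"
    by (rule image_subsetI) (simp only: g_def restrict_PiE_iff, simp)
  moreover have "finite (PiE {..<n} (\<lambda>_. UNIV :: 'a set))" by (rule finite_PiE) auto
  ultimately show ?thesis using finite_subset finite_imageD by blast
qed

lemma syn_nth: "syn n h e $ k = (\<Sum>i<n. e i * h i $ k)"
  unfolding syn_def by simp

lemma syn_diff: "syn n h (x - y) = syn n h x - syn n h y"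
  by (simp add: vec_eq_iff syn_nth algebra_simps sum_subtractf)

lemma syn_add: "syn n h (x + y) = syn n h x + syn n h y"
  by (simp add: vec_eq_iff syn_nth algebra_simps sum.distrib)

lemma syn_scale: "syn n h (wscale c x) = c *s syn n h x"
  by (simp add: vec_eq_iff syn_nth wscale_def sum_distrib_left algebra_simps)

lemma syn_zero[simp]: "syn n h 0 = 0"
  by (simp add: syn_def)

lemma syn_sparse:
  assumes "supp n e \<subseteq> S" "S \<subseteq> {..<n}"
  shows "syn n h e = (\<Sum>i\<in>S. e i *s h i)"
  unfolding syn_def
  by (rule sum.mono_neutral_right) (use assms in \<open>auto simp: supp_def\<close>)

lemma syn_delta: "i < n \<Longrightarrow> syn n h (delta i a) = a *s h i"
  by (subst syn_sparse[of _ _ "{i}"]) (auto simp: supp_def delta_def)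

lemma supp_delta: "supp n (delta i a) \<subseteq> {i}"
  unfolding supp_def delta_def by auto

lemma indep2:
  fixes x1 x2 :: "'a::field^3"
  assumes "x1 \<noteq> 0" "x2 \<noteq> 0" "pg_point x1 \<noteq> pg_point x2" "a *s x1 + b *s x2 = 0"
  shows "a = 0 \<and> b = 0"
proof -
  have "b = 0"
  proof (rule ccontr)
    assume b: "b \<noteq> 0"
    have "a * x1$k + b * x2$k = 0" for k using assms(4) by (simp add: vec_eq_iff)
    then have "x2$k = (- a / b) * x1$k" for k using b by (simp add: field_simps) (metis add_eq_0_iff mult.commute)
    then have "x2 = (- a / b) *s x1" by (simp add: vec_eq_iff)
    moreover have "- a / b \<noteq> 0" using calculation assms(2) by auto
    ultimately show False using pg_point_eq[OF assms(1,2)] assms(3) by blast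
  qed
  then show ?thesis using assms by auto
qed

lemma dist_le_iff:
  assumes "finite C" "C \<noteq> {}"
  shows "dist_to_code n C x \<le> d \<longleftrightarrow> (\<exists>c\<in>C. hamming n x c \<le> d)"
  unfolding dist_to_code_def using assms by (simp add: Min_le_iff)

lemma card_le2: "A \<subseteq> {i, j} \<Longrightarrow> card A \<le> 2"
  using card_mono[of "{i,j}" A] by (cases "i = j") auto

locale cs =
  fixes K :: "('a::{field,finite}^3) set set" and n s :: nat and h :: "nat \<Rightarrow> 'a^3"
  assumes arc: "maximal_arc K n s" and s2: "2 \<le> s" and sq: "s \<le> CARD('a)"
    and corr: "corresponds n h K" and sn: "s < n"
begin

abbreviation P where "P i \<equiv> pg_point (h i)"

definition C where "C = parity_code n h"

lemma Kp: "K \<subseteq> pg_points" and cardK: "card K = n"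
  using arc unfolding maximal_arc_def by auto

lemma hnz: "i < n \<Longrightarrow> h i \<noteq> 0" using corr unfolding corresponds_def by auto

lemma Pin: "i < n \<Longrightarrow> P i \<in> K"
  using corr unfolding corresponds_def bij_betw_def by auto

lemma Pinj: "i < n \<Longrightarrow> j < n \<Longrightarrow> P i = P j \<Longrightarrow> i = j"
  using corr unfolding corresponds_def bij_betw_def inj_on_def by auto

lemma Psurj: "Q \<in> K \<Longrightarrow> \<exists>i<n. Q = P i"
  using corr unfolding corresponds_def bij_betw_def by auto

lemma C_eq: "C = {x\<in>words n. syn n h x = 0}"
  unfolding C_def parity_code_def syn_def ..

lemma C_fin: "finite C" unfolding C_eq using finite_words by (rule finite_subset[rotated]) auto

lemma C_zero: "0 \<in> C" unfolding C_eq by simp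

lemma Kne: "K \<noteq> {}" using cardK sn by auto

lemma rep:
  assumes "x \<noteq> 0" "pg_point x \<in> K" shows "\<exists>i<n. \<exists>c. c \<noteq> 0 \<and> x = c *s h i"
proof -
  obtain i where i: "i < n" "pg_point x = P i" using Psurj assms(2) by blast
  then have "\<exists>c. c \<noteq> 0 \<and> x = c *s h i" using pg_point_eq[OF hnz[OF i(1)] assms(1)] by simp
  then show ?thesis using i by blast
qed

lemma W2:
  assumes "y \<noteq> 0" "pg_point y \<notin> K"
  shows "\<exists>i j a b. i < n \<and> j < n \<and> i \<noteq> j \<and> y = a *s h i + b *s h j"
proof -
  obtain x1 x2 \<alpha> \<beta> where h: "x1 \<noteq> 0" "x2 \<noteq> 0" "pg_point x1 \<in> K" "pg_point x2 \<in> K"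
    "pg_point x1 \<noteq> pg_point x2" "y = \<alpha> *s x1 + \<beta> *s x2"
    using secant_through[OF arc s2 Kne assms] by blast
  obtain i c1 where i: "i < n" "c1 \<noteq> 0" "x1 = c1 *s h i" using rep h(1,3) by blast
  obtain j c2 where j: "j < n" "c2 \<noteq> 0" "x2 = c2 *s h j" using rep h(2,4) by blast
  have "i \<noteq> j"
  proof
    assume "i = j"
    then have "pg_point x1 = P i" "pg_point x2 = P i"
      using pg_point_eq[OF hnz[OF i(1)] h(1)] pg_point_eq[OF hnz[OF i(1)] h(2)] i j by auto
    then show False using h(5) by simp
  qed
  moreover have "y = (\<alpha> * c1) *s h i + (\<beta> * c2) *s h j" using h(6) i j by (simp add: vector_smult_assoc)
  ultimately show ?thesis using i j by blast
qed

lemma two_word: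
  assumes "i < n" "j < n"
  shows "delta i a + delta j b \<in> words n" "syn n h (delta i a + delta j b) = a *s h i + b *s h j"
    "supp n (delta i a + delta j b) \<subseteq> {i, j}"
    apply (simp add: assms words_add words_delta)
   apply (simp add: assms syn_add syn_delta)
  by (auto simp: supp_def delta_def)

lemma low:
  assumes x: "x \<in> words n"
  shows "(\<exists>c\<in>C. hamming n x c \<le> 1) \<longleftrightarrow> (syn n h x = 0 \<or> pg_point (syn n h x) \<in> K)"
proof
  assume "\<exists>c\<in>C. hamming n x c \<le> 1"
  then obtain c where c: "c \<in> C" "card (supp n (x - c)) \<le> 1" by (auto simp: hamming_supp)
  have sx: "syn n h (x - c) = syn n h x" using c(1) unfolding C_eq by (simp add: syn_diff)
  have w: "x - c \<in> words n" using c(1) x unfolding C_eq by (auto intro: words_diff)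
  show "syn n h x = 0 \<or> pg_point (syn n h x) \<in> K"
  proof (cases "supp n (x - c) = {}")
    case True
    then have "x - c = 0" using words_supp_zero w by blast
    then show ?thesis using sx by simp
  next
    case False
    then obtain i where i: "supp n (x - c) = {i}" using c(2)
      by (metis card_0_eq card_1_singletonE finite_supp le_SucE One_nat_def le_zero_eq)
    then have in_: "i < n" "(x - c) i \<noteq> 0" unfolding supp_def by auto
    have "syn n h (x - c) = (x - c) i *s h i" using syn_sparse[where e="x - c" and S="{i}" and n=n and h=h] i in_ by simp
    then have "syn n h x = (x - c) i *s h i" using sx by simp
    then have "pg_point (syn n h x) = P i" using pg_point_eq[OF hnz[OF in_(1)], of "syn n h x"] in_ hnz
      by (metis vector_mul_eq_0)
    then show ?thesis using Pin in_ by simp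
  qed
next
  assume "syn n h x = 0 \<or> pg_point (syn n h x) \<in> K"
  then show "\<exists>c\<in>C. hamming n x c \<le> 1"
  proof
    assume "syn n h x = 0"
    then have "x \<in> C" using x unfolding C_eq by simp
    then show ?thesis by (intro bexI[of _ x]) (auto simp: hamming_def)
  next
    assume h1: "pg_point (syn n h x) \<in> K"
    show ?thesis
    proof (cases "syn n h x = 0")
      case True
      then have "x \<in> C" using x unfolding C_eq by simp
      then show ?thesis by (intro bexI[of _ x]) (auto simp: hamming_def)
    next
      case False
      then obtain i t where i: "i < n" "syn n h x = t *s h i" using rep h1 by blast
      define c where "c = x - delta i t"
      have "c \<in> C" unfolding C_eq c_def using x i by (simp add: words_diff words_delta syn_diff syn_delta)
      moreover have "hamming n x c \<le> 1" unfolding hamming_supp c_def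
        using card_mono[OF _ supp_delta[of n i t]] by simp
      ultimately show ?thesis by blast
    qed
  qed
qed

lemma cover:
  assumes x: "x \<in> words n" shows "\<exists>c\<in>C. hamming n x c \<le> 2"
proof (cases "syn n h x = 0 \<or> pg_point (syn n h x) \<in> K")
  case True
  then show ?thesis using low[OF x] by force
next
  case False
  then obtain i j a b where ij: "i < n" "j < n" "i \<noteq> j" "syn n h x = a *s h i + b *s h j"
    using W2 by blast
  define e where "e = delta i a + delta j b"
  note ew = two_word[OF ij(1,2), of a b, folded e_def]
  define c where "c = x - e"
  have "c \<in> C" unfolding C_eq c_def using x ew ij by (simp add: words_diff syn_diff)
  moreover have "x - c = e" unfolding c_def by simp
  then have "hamming n x c \<le> 2" unfolding hamming_supp using card_le2[OF ew(3)] by simp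
  ultimately show ?thesis by blast
qed

lemma dist_le: "x \<in> words n \<Longrightarrow> dist_to_code n C x \<le> d \<longleftrightarrow> (\<exists>c\<in>C. hamming n x c \<le> d)"
  using dist_le_iff[OF C_fin] C_zero by blast

lemma dist2_iff:
  assumes "x \<in> words n"
  shows "dist_to_code n C x = 2 \<longleftrightarrow> \<not> (syn n h x = 0 \<or> pg_point (syn n h x) \<in> K)"
proof -
  have "dist_to_code n C x \<le> 2" using dist_le[OF assms] cover[OF assms] by blast
  moreover have "dist_to_code n C x \<le> 1 \<longleftrightarrow> (syn n h x = 0 \<or> pg_point (syn n h x) \<in> K)"
    using dist_le[OF assms] low[OF assms] by blast
  ultimately show ?thesis by linarith
qed

lemma covrad: "covering_radius n C = 2"
proof -
  obtain Q where Q: "Q \<in> pg_points" "Q \<notin> K" using arc_ne[OF arc sq] Kp by blast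
  obtain y where y: "y \<noteq> 0" "Q = pg_point y" using Q(1) by (rule pg_pointsE)
  obtain i j a b where ij: "i < n" "j < n" "i \<noteq> j" "y = a *s h i + b *s h j"
    using W2 y Q by blast
  define x where "x = delta i a + delta j b"
  note xw = two_word[OF ij(1,2), of a b, folded x_def]
  have d2: "dist_to_code n C x = 2" using dist2_iff[OF xw(1)] xw(2) ij y Q by simp
  show ?thesis unfolding covering_radius_def
  proof (rule Max_eqI)
    show "finite (dist_to_code n C ` words n)" by (rule finite_imageI[OF finite_words])
    show "2 \<in> dist_to_code n C ` words n" using d2 xw(1) by force
  next
    fix d assume "d \<in> dist_to_code n C ` words n"
    then obtain z where "z \<in> words n" "d = dist_to_code n C z" by auto
    then show "d \<le> 2" using dist_le cover by blast
  qed
qed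

end

context cs
begin

lemma Pinj_on: "B \<subseteq> {..<n} \<Longrightarrow> inj_on P B"
  unfolding inj_on_def using Pinj by blast

lemma count:
  assumes x: "x \<in> words n" and sg: "syn n h x \<noteq> 0" "pg_point (syn n h x) \<notin> K" and ev: "even s"
  shows "card {c\<in>C. hamming n x c = 2} = ((s - 1) * n) div 2"
proof -
  define \<sigma> where "\<sigma> = syn n h x"
  define Qp where "Qp = pg_point \<sigma>"
  have sn0: "\<sigma> \<noteq> 0" and QK: "Qp \<notin> K" using sg unfolding \<sigma>_def Qp_def by auto
  have Qpp: "Qp \<in> pg_points" unfolding Qp_def using pg_point_in[OF sn0] .
  define L where "L = {l\<in>pg_lines. Qp \<in> l \<and> card (l \<inter> K) \<ge> 2}"
  have cL: "card L * s = n" unfolding L_def using sat_count(1)[OF arc s2 Qpp QK] .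
  define E where "E = {e \<in> words n. card (supp n e) = 2 \<and> syn n h e = \<sigma>}"
  define T where "T = {B. B \<subseteq> {..<n} \<and> card B = 2 \<and> (\<exists>l\<in>pg_lines. Qp \<in> l \<and> P ` B \<subseteq> l)}"
  have st1: "card {c\<in>C. hamming n x c = 2} = card E"
  proof (rule bij_betw_same_card, rule bij_betw_byWitness[where f'="\<lambda>e. x - e"])
    show "\<forall>a\<in>{c \<in> C. hamming n x c = 2}. x - (x - a) = a" by simp
    show "\<forall>a'\<in>E. x - (x - a') = a'" by simp
    show "(\<lambda>c. x - c) ` {c \<in> C. hamming n x c = 2} \<subseteq> E"
      unfolding E_def \<sigma>_def using x by (auto simp: C_eq words_diff syn_diff hamming_supp)
    show "(\<lambda>e. x - e) ` E \<subseteq> {c \<in> C. hamming n x c = 2}"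
      unfolding E_def \<sigma>_def using x by (auto simp: C_eq words_diff syn_diff hamming_supp)
  qed
  have suppE: "supp n e = {i, j} \<Longrightarrow> i \<noteq> j \<Longrightarrow> e \<in> E \<Longrightarrow>
      i < n \<and> j < n \<and> syn n h e = e i *s h i + e j *s h j" for e i j
  proof -
    assume a: "supp n e = {i, j}" "i \<noteq> j" "e \<in> E"
    have ij: "i < n" "j < n" using a(1) supp_sub[of n e] by auto
    have "syn n h e = (\<Sum>k\<in>{i,j}. e k *s h k)" using syn_sparse[where e=e and S="{i,j}" and n=n and h=h] a(1) ij by simp
    then show ?thesis using ij a(2) by simp
  qed
  have st2: "card E = card T"
  proof -
    have inj: "inj_on (supp n) E"
    proof
      fix e e' assume e: "e \<in> E" and e': "e' \<in> E" and eq: "supp n e = supp n e'"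
      obtain i j where ij: "supp n e = {i, j}" "i \<noteq> j" using e unfolding E_def by (auto simp: card_2_iff)
      have A: "i < n" "j < n" "syn n h e = e i *s h i + e j *s h j" using suppE[OF ij e] by auto
      have B: "syn n h e' = e' i *s h i + e' j *s h j" using suppE[OF ij(1)[unfolded eq] ij(2) e'] by auto
      have "syn n h e = syn n h e'" using e e' unfolding E_def by auto
      then have "(e i - e' i) *s h i + (e j - e' j) *s h j = 0" using A(3) B
        by (simp add: vector_sub_rdistrib algebra_simps)
      then have "e i - e' i = 0 \<and> e j - e' j = 0"
        using indep2[OF hnz[OF A(1)] hnz[OF A(2)]] Pinj A(1,2) ij(2) by blast
      then have eqij: "e i = e' i" "e j = e' j" by auto
      show "e = e'"
      proof
        fix k
        show "e k = e' k"
        proof (cases "k \<in> {i, j}")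
          case True then show ?thesis using eqij by auto
        next
          case False
          then have "k \<notin> supp n e" "k \<notin> supp n e'" using ij eq by auto
          moreover have "e \<in> words n" "e' \<in> words n" using e e' unfolding E_def by auto
          ultimately show ?thesis unfolding supp_def words_def by (metis (mono_tags) mem_Collect_eq not_less)
        qed
      qed
    qed
    have img: "supp n ` E = T"
    proof
      show "supp n ` E \<subseteq> T"
      proof
        fix B assume "B \<in> supp n ` E"
        then obtain e where e: "e \<in> E" "B = supp n e" by auto
        obtain i j where ij: "supp n e = {i, j}" "i \<noteq> j" using e unfolding E_def by (auto simp: card_2_iff)
        have A: "i < n" "j < n" "syn n h e = e i *s h i + e j *s h j" using suppE[OF ij e(1)] by auto
        have Pij: "P i \<noteq> P j" using Pinj A ij by blast
        note lt = line_through[OF hnz[OF A(1)] hnz[OF A(2)] Pij]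
        have "\<sigma> = e i *s h i + e j *s h j" using e(1) A(3) unfolding E_def by auto
        then have "dot3 (cross (h i) (h j)) \<sigma> = 0" by (simp add: dot3_lin)
        then have "Qp \<in> pg_line (cross (h i) (h j))" unfolding Qp_def using in_line[OF sn0] by simp
        then show "B \<in> T" unfolding T_def using e(1) ij lt e(2) supp_sub[of n e] unfolding E_def
          by (intro CollectI conjI bexI[of _ "pg_line (cross (h i) (h j))"]) auto
      qed
    next
      show "T \<subseteq> supp n ` E"
      proof
        fix B assume "B \<in> T"
        then obtain l where B: "B \<subseteq> {..<n}" "card B = 2" "l \<in> pg_lines" "Qp \<in> l" "P ` B \<subseteq> l"
          unfolding T_def by auto
        obtain i j where ij: "B = {i, j}" "i \<noteq> j" using B(2) by (auto simp: card_2_iff)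
        have ijn: "i < n" "j < n" using B(1) ij by auto
        have Pij: "P i \<noteq> P j" using Pinj ijn ij by blast
        have "l = pg_line (cross (h i) (h j))"
          using line_unique[OF hnz[OF ijn(1)] hnz[OF ijn(2)] Pij B(3)] B(5) ij by auto
        then have "dot3 (cross (h i) (h j)) \<sigma> = 0" using B(4) in_line[OF sn0] unfolding Qp_def by simp
        then obtain a b where ab: "\<sigma> = a *s h i + b *s h j"
          using secant_decomp[OF hnz[OF ijn(1)] hnz[OF ijn(2)] Pij] by blast
        have a0: "a \<noteq> 0"
        proof
          assume "a = 0"
          then have "\<sigma> = b *s h j" using ab by simp
          moreover then have "b \<noteq> 0" using sn0 by auto
          ultimately have "Qp = P j" unfolding Qp_def using pg_point_eq[OF hnz[OF ijn(2)] sn0] by auto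
          then show False using QK Pin ijn by auto
        qed
        have b0: "b \<noteq> 0"
        proof
          assume "b = 0"
          then have "\<sigma> = a *s h i" using ab by simp
          moreover then have "a \<noteq> 0" using sn0 by auto
          ultimately have "Qp = P i" unfolding Qp_def using pg_point_eq[OF hnz[OF ijn(1)] sn0] by auto
          then show False using QK Pin ijn by auto
        qed
        define e where "e = delta i a + delta j b"
        note ew = two_word[OF ijn, of a b, folded e_def]
        have "supp n e = {i, j}"
        proof
          show "supp n e \<subseteq> {i, j}" using ew(3) .
          show "{i, j} \<subseteq> supp n e" using a0 b0 ij(2) ijn unfolding e_def supp_def delta_def by auto
        qed
        then have "e \<in> E" "supp n e = B" using ew ab ij(2) ij(1) unfolding E_def by auto
        then show "B \<in> supp n ` E" by blast
      qed
    qed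
    show ?thesis using card_image[OF inj] img by simp
  qed
  define I where "I l = {i. i < n \<and> P i \<in> l}" for l
  have finL: "finite L" by simp
  have TU: "T = (\<Union>l\<in>L. {B. B \<subseteq> I l \<and> card B = 2})"
  proof
    show "T \<subseteq> (\<Union>l\<in>L. {B. B \<subseteq> I l \<and> card B = 2})"
    proof
      fix B assume "B \<in> T"
      then obtain l where B: "B \<subseteq> {..<n}" "card B = 2" "l \<in> pg_lines" "Qp \<in> l" "P ` B \<subseteq> l"
        unfolding T_def by auto
      have "P ` B \<subseteq> l \<inter> K" using B(1,5) Pin by auto
      moreover have "card (P ` B) = 2" using card_image[OF Pinj_on[OF B(1)]] B(2) by simp
      ultimately have "card (l \<inter> K) \<ge> 2" using card_mono[of "l \<inter> K" "P ` B"] by fastforce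
      then have "l \<in> L" unfolding L_def using B by auto
      moreover have "B \<subseteq> I l" unfolding I_def using B by auto
      ultimately show "B \<in> (\<Union>l\<in>L. {B. B \<subseteq> I l \<and> card B = 2})" using B(2) by auto
    qed
    show "(\<Union>l\<in>L. {B. B \<subseteq> I l \<and> card B = 2}) \<subseteq> T"
      unfolding T_def L_def I_def by auto
  qed
  have cI: "l \<in> L \<Longrightarrow> card (I l) = s" for l
  proof -
    assume l: "l \<in> L"
    have "P ` I l = l \<inter> K"
    proof
      show "P ` I l \<subseteq> l \<inter> K" unfolding I_def using Pin by auto
      show "l \<inter> K \<subseteq> P ` I l" unfolding I_def using Psurj by force
    qed
    moreover have "inj_on P (I l)" using Pinj_on[of "I l"] unfolding I_def by auto
    ultimately have "card (I l) = card (l \<inter> K)" using card_image by fastforce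
    then show ?thesis using arc_line_card[OF arc _ _ s2] l unfolding L_def by auto
  qed
  have "card T = (\<Sum>l\<in>L. card {B. B \<subseteq> I l \<and> card B = 2})"
  proof (subst TU, rule card_UN_disjoint[OF finL])
    show "\<forall>l\<in>L. finite {B. B \<subseteq> I l \<and> card B = 2}"
      by (auto intro: finite_subset[of _ "Pow (I l)" for l] simp: I_def)
    show "\<forall>l1\<in>L. \<forall>l2\<in>L. l1 \<noteq> l2 \<longrightarrow> {B. B \<subseteq> I l1 \<and> card B = 2} \<inter> {B. B \<subseteq> I l2 \<and> card B = 2} = {}"
    proof (intro ballI impI)
      fix l1 l2 assume l: "l1 \<in> L" "l2 \<in> L" "l1 \<noteq> l2"
      show "{B. B \<subseteq> I l1 \<and> card B = 2} \<inter> {B. B \<subseteq> I l2 \<and> card B = 2} = {}"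
      proof (rule ccontr)
        assume "{B. B \<subseteq> I l1 \<and> card B = 2} \<inter> {B. B \<subseteq> I l2 \<and> card B = 2} \<noteq> {}"
        then obtain B where B: "B \<subseteq> I l1" "B \<subseteq> I l2" "card B = 2" by auto
        then obtain i j where ij: "B = {i, j}" "i \<noteq> j" by (auto simp: card_2_iff)
        have "i < n" "j < n" "P i \<in> l1" "P j \<in> l1" "P i \<in> l2" "P j \<in> l2"
          using B ij unfolding I_def by auto
        moreover have "P i \<noteq> P j" using Pinj calculation ij by blast
        ultimately have "l1 = l2" using two_lines[of l1 l2 "P i" "P j"] l unfolding L_def by auto
        then show False using l by simp
      qed
    qed
  qed
  also have "\<dots> = (\<Sum>l\<in>L. s choose 2)"
  proof (rule sum.cong[OF refl])
    fix l assume "l \<in> L"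
    then show "card {B. B \<subseteq> I l \<and> card B = 2} = s choose 2"
      using n_subsets[of "I l" 2] cI unfolding I_def by auto
  qed
  finally have "card T = card L * (s choose 2)" by simp
  then show ?thesis using st1 st2 mu_arith[OF ev cL] by simp
qed

end



lemma vs_wscale: "vector_space (wscale :: 'a::field \<Rightarrow> (nat \<Rightarrow> 'a) \<Rightarrow> (nat \<Rightarrow> 'a))"
  by unfold_locales (simp_all add: wscale_def fun_eq_iff algebra_simps)

lemma indep3:
  fixes x1 x2 x3 :: "'a::field^3"
  assumes "dot3 (cross x1 x2) x3 \<noteq> 0" "a *s x1 + b *s x2 + c *s x3 = 0"
  shows "a = 0 \<and> b = 0 \<and> c = 0"
proof -
  define v where "v = a *s x1 + b *s x2 + c *s x3"
  have "dot3 (cross v x2) x3 = a * dot3 (cross x1 x2) x3"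
       "dot3 (cross x1 v) x3 = b * dot3 (cross x1 x2) x3"
       "dot3 (cross x1 x2) v = c * dot3 (cross x1 x2) x3"
    unfolding v_def by (simp_all add: dot3_expand algebra_simps)
  then show ?thesis using assms unfolding v_def[symmetric] by (simp add: dot3_expand)
qed

context cs
begin

lemma third: "\<exists>m<n. m \<noteq> 0 \<and> m \<noteq> 1 \<and> dot3 (cross (h 0) (h 1)) (h m) \<noteq> 0"
proof -
  have n01: "0 < n" "1 < n" using sn s2 by auto
  have P01: "P 0 \<noteq> P 1" using Pinj n01 by fastforce
  note lt = line_through[OF hnz[OF n01(1)] hnz[OF n01(2)] P01]
  define l where "l = pg_line (cross (h 0) (h 1))"
  have "card (l \<inter> K) = 0 \<or> card (l \<inter> K) = s" using arc lt(1) unfolding maximal_arc_def l_def by blast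
  then have "card (l \<inter> K) < card K" using cardK sn by auto
  then have "\<not> K \<subseteq> l" by (metis Int_absorb1 less_irrefl inf.commute)
  then obtain Q where Q: "Q \<in> K" "Q \<notin> l" by auto
  then obtain m where m: "m < n" "Q = P m" using Psurj by blast
  have "dot3 (cross (h 0) (h 1)) (h m) \<noteq> 0" using in_line[OF hnz[OF m(1)]] Q m unfolding l_def by auto
  moreover have "m \<noteq> 0" proof assume "m = 0" then show False using Q m lt unfolding l_def by simp qed
  moreover have "m \<noteq> 1" proof assume "m = 1" then show False using Q m lt unfolding l_def by simp qed
  ultimately show ?thesis using m by blast
qed

definition m3 where "m3 = (SOME m. m < n \<and> m \<noteq> 0 \<and> m \<noteq> 1 \<and> dot3 (cross (h 0) (h 1)) (h m) \<noteq> 0)"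
definition D where "D = dot3 (cross (h 0) (h 1)) (h m3)"
definition J where "J = {..<n} - {0, 1, m3}"
definition bv where "bv j = delta j 1 - delta 0 (dot3 (cross (h j) (h 1)) (h m3) / D)
   - delta 1 (dot3 (cross (h 0) (h j)) (h m3) / D) - delta m3 (dot3 (cross (h 0) (h 1)) (h j) / D)"

lemma m3: "m3 < n" "m3 \<noteq> 0" "m3 \<noteq> 1" "D \<noteq> 0"
  using someI_ex[OF third] unfolding m3_def[symmetric] D_def by auto

lemma n01: "0 < n" "1 < n" using sn s2 by auto

lemma cardJ: "card J = n - 3"
proof -
  have "card {0, 1, m3} = 3" using m3 by simp
  moreover have "{0, 1, m3} \<subseteq> {..<n}" using m3 n01 by auto
  ultimately show ?thesis unfolding J_def by (simp add: card_Diff_subset)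
qed

lemma bv_val: "j \<in> J \<Longrightarrow> k \<in> J \<Longrightarrow> bv j k = (if k = j then 1 else 0)"
  unfolding bv_def J_def delta_def by auto

lemma bv_in: "j \<in> J \<Longrightarrow> bv j \<in> C"
proof -
  assume j: "j \<in> J"
  then have jn: "j < n" unfolding J_def by auto
  define A where "A = dot3 (cross (h j) (h 1)) (h m3)"
  define B where "B = dot3 (cross (h 0) (h j)) (h m3)"
  define M where "M = dot3 (cross (h 0) (h 1)) (h j)"
  have cr: "D *s h j = A *s h 0 + B *s h 1 + M *s h m3"
    using cramer[of "h 0" "h 1" "h m3" "h j"] unfolding A_def B_def M_def D_def by simp
  have w: "bv j \<in> words n" unfolding bv_def using jn m3 n01 by (simp add: words_diff words_delta)
  have "syn n h (bv j) = h j - (A / D) *s h 0 - (B / D) *s h 1 - (M / D) *s h m3"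
    unfolding bv_def A_def B_def M_def using jn m3 n01 by (simp add: syn_diff syn_delta)
  also have "\<dots> = 0"
  proof -
    have "D * h j $ k = A * h 0 $ k + B * h 1 $ k + M * h m3 $ k" for k
      using cr by (simp add: vec_eq_iff)
    then show ?thesis using m3(4) by (simp add: vec_eq_iff field_simps)
  qed
  finally show ?thesis using w unfolding C_eq by simp
qed

lemma bv_inj: "inj_on bv J"
proof
  fix i j assume "i \<in> J" "j \<in> J" "bv i = bv j"
  then have "bv i i = bv j i" by simp
  then show "i = j" using bv_val \<open>i \<in> J\<close> \<open>j \<in> J\<close> by (auto split: if_splits)
qed

lemma C_subspace: "module.subspace wscale C"
proof -
  interpret vs: vector_space "wscale :: 'a \<Rightarrow> (nat \<Rightarrow> 'a) \<Rightarrow> (nat \<Rightarrow> 'a)" by (rule vs_wscale)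
  show ?thesis
    by (rule vs.subspaceI) (auto simp: C_eq words_add words_scale syn_add syn_scale)
qed

lemma dimC: "code_dim C = n - 3"
proof -
  interpret vs: vector_space "wscale :: 'a \<Rightarrow> (nat \<Rightarrow> 'a) \<Rightarrow> (nat \<Rightarrow> 'a)" by (rule vs_wscale)
  have finJ: "finite J" unfolding J_def by simp
  have ind: "vs.independent (bv ` J)"
  proof (rule vs.independent_if_scalars_zero)
    show "finite (bv ` J)" using finJ by simp
  next
    fix f x assume s0: "(\<Sum>x\<in>bv ` J. wscale (f x) x) = 0" and x: "x \<in> bv ` J"
    then obtain j where j: "j \<in> J" "x = bv j" by auto
    have "0 = (\<Sum>x\<in>bv ` J. wscale (f x) x) j" using s0 by simp
    also have "\<dots> = (\<Sum>y\<in>bv ` J. f y * y j)" by (simp add: sum_fun_apply wscale_def)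
    also have "\<dots> = (\<Sum>i\<in>J. f (bv i) * bv i j)" by (simp add: sum.reindex[OF bv_inj])
    also have "\<dots> = (\<Sum>i\<in>J. if i = j then f (bv i) else 0)"
      by (rule sum.cong[OF refl]) (use j in \<open>simp add: bv_val\<close>)
    also have "\<dots> = f (bv j)" using j finJ by simp
    finally show "f x = 0" using j by simp
  qed
  have sp: "vs.span (bv ` J) = C"
  proof (rule vs.span_subspace)
    show "bv ` J \<subseteq> C" using bv_in by auto
    show "vs.subspace C" by (rule C_subspace)
  next
    show "C \<subseteq> vs.span (bv ` J)"
    proof
      fix x assume x: "x \<in> C"
      define y where "y = x - (\<Sum>j\<in>J. wscale (x j) (bv j))"
      have yC: "y \<in> C" unfolding y_def
        by (rule vs.subspace_diff[OF C_subspace x], rule vs.subspace_sum[OF C_subspace],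
            rule vs.subspace_scale[OF C_subspace], rule bv_in)
      have yJ: "y k = 0" if k: "k \<in> J" for k
      proof -
        have "(\<Sum>j\<in>J. wscale (x j) (bv j)) k = (\<Sum>j\<in>J. x j * bv j k)"
          by (simp add: sum_fun_apply wscale_def)
        also have "\<dots> = (\<Sum>j\<in>J. if j = k then x j else 0)"
          by (rule sum.cong[OF refl]) (use k in \<open>auto simp add: bv_val\<close>)
        also have "\<dots> = x k" using k finJ by simp
        finally show ?thesis unfolding y_def by simp
      qed
      have yw: "y \<in> words n" and ys: "syn n h y = 0" using yC unfolding C_eq by auto
      have suppy: "supp n y \<subseteq> {0, 1, m3}"
        using yJ unfolding supp_def J_def by auto
      have "syn n h y = (\<Sum>i\<in>{0, 1, m3}. y i *s h i)"
        by (rule syn_sparse[OF suppy]) (use m3 n01 in auto)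
      then have "y 0 *s h 0 + y 1 *s h 1 + y m3 *s h m3 = 0" using ys m3 by (simp add: add.assoc)
      then have "y 0 = 0 \<and> y 1 = 0 \<and> y m3 = 0" using indep3[of "h 0" "h 1" "h m3"] m3(4) unfolding D_def by blast
      then have "supp n y = {}" using suppy unfolding supp_def by auto
      then have "y = 0" using words_supp_zero yw by blast
      then have "x = (\<Sum>j\<in>J. wscale (x j) (bv j))" unfolding y_def by simp
      also have "\<dots> \<in> vs.span (bv ` J)"
        by (rule vs.span_sum, rule vs.span_scale, rule vs.span_base) auto
      finally show "x \<in> vs.span (bv ` J)" .
    qed
  qed
  have "vs.dim C = card (bv ` J)" using vs.dim_span_eq_card_independent[OF ind] sp by simp
  also have "\<dots> = n - 3" using card_image[OF bv_inj] cardJ by simp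
  finally show ?thesis unfolding code_dim_def .
qed

lemma nonzero_cw: "4 \<le> n \<Longrightarrow> \<exists>c\<in>C. c \<noteq> 0"
proof -
  assume "4 \<le> n"
  then have "J \<noteq> {}" using cardJ by auto
  then obtain j where j: "j \<in> J" by auto
  then have "bv j j = 1" using bv_val by simp
  then have "bv j \<noteq> 0" by (metis zero_fun_apply zero_neq_one)
  then show ?thesis using bv_in j by blast
qed

lemma weight4:
  assumes s2': "s = 2" and c: "c \<in> C" "c \<noteq> 0"
  shows "4 \<le> card (supp n c)"
proof (rule ccontr)
  assume "\<not> 4 \<le> card (supp n c)"
  then have le: "card (supp n c) \<le> 3" by simp
  define S where "S = supp n c"
  have cw: "c \<in> words n" and cs0: "syn n h c = 0" using c unfolding C_eq by auto
  have Sne: "S \<noteq> {}" using words_supp_zero[OF cw] c(2) unfolding S_def by blast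
  have Sn: "S \<subseteq> {..<n}" unfolding S_def by (rule supp_sub)
  have nzS: "i \<in> S \<Longrightarrow> c i \<noteq> 0" for i unfolding S_def supp_def by auto
  have sum0: "(\<Sum>i\<in>S. c i *s h i) = 0" using syn_sparse[where e=c and S=S and n=n and h=h] Sn cs0 unfolding S_def by simp
  have c0: "card S \<noteq> 0" using Sne by (simp add: S_def)
  have "card S = 1 \<or> card S = 2 \<or> card S = 3" using le c0 unfolding S_def by linarith
  then show False
  proof (elim disjE)
    assume "card S = 1"
    then obtain i where "S = {i}" by (auto simp: card_1_singleton_iff)
    then show False using sum0 nzS hnz Sn by auto
  next
    assume "card S = 2"
    then obtain i j where ij: "S = {i, j}" "i \<noteq> j" by (auto simp: card_2_iff)
    then have "c i *s h i + c j *s h j = 0" using sum0 by simp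
    have ijn: "i < n" "j < n" using ij Sn by auto
    have "P i \<noteq> P j" using Pinj[OF ijn] ij(2) by blast
    then have "c i = 0" using indep2[OF hnz[OF ijn(1)] hnz[OF ijn(2)]] \<open>c i *s h i + c j *s h j = 0\<close> by blast
    then show False using nzS ij by auto
  next
    assume "card S = 3"
    then obtain i j k where ijk: "S = {i, j, k}" "i \<noteq> j" "j \<noteq> k" "i \<noteq> k" by (auto simp: card_3_iff)
    have n3: "i < n" "j < n" "k < n" using ijk Sn by auto
    have "c i *s h i + c j *s h j + c k *s h k = 0" using sum0 ijk by (simp add: add.assoc)
    then have "dot3 (cross (h i) (h j)) (c i *s h i + c j *s h j + c k *s h k) = 0" by (simp add: dot3_lin)
    then have "c k * dot3 (cross (h i) (h j)) (h k) = 0" by (simp add: dot3_lin)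
    moreover have "c k \<noteq> 0" using nzS ijk(1) by simp
    ultimately have dk: "dot3 (cross (h i) (h j)) (h k) = 0" by simp
    have Pij: "P i \<noteq> P j" using Pinj[OF n3(1,2)] ijk(2) by blast
    have Pik: "P i \<noteq> P k" using Pinj[OF n3(1,3)] ijk(4) by blast
    have Pjk: "P j \<noteq> P k" using Pinj[OF n3(2,3)] ijk(3) by blast
    note lt = line_through[OF hnz[OF n3(1)] hnz[OF n3(2)] Pij]
    define l where "l = pg_line (cross (h i) (h j))"
    have "P k \<in> l" unfolding l_def using in_line[OF hnz[OF n3(3)]] dk by simp
    moreover have "P i \<in> l" "P j \<in> l" using lt(2,3) unfolding l_def by simp_all
    moreover have "P i \<in> K" "P j \<in> K" "P k \<in> K" using Pin n3 by simp_all
    ultimately have sub: "{P i, P j, P k} \<subseteq> l \<inter> K" by simp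
    have "card {P i, P j, P k} = 3" using Pij Pik Pjk by simp
    moreover have "card {P i, P j, P k} \<le> card (l \<inter> K)" by (rule card_mono[OF _ sub]) simp
    ultimately have "3 \<le> card (l \<inter> K)" by simp
    moreover have "card (l \<inter> K) = 0 \<or> card (l \<inter> K) = s" using arc lt(1) unfolding maximal_arc_def l_def by blast
    ultimately show False using s2' by auto
  qed
qed

lemma mindist:
  assumes "s = 2" "4 \<le> n" shows "min_distance n C \<ge> 4"
proof -
  define M where "M = {hamming n c c' | c c'. c \<in> C \<and> c' \<in> C \<and> c \<noteq> c'}"
  have "M \<subseteq> (\<lambda>(c, c'). hamming n c c') ` (C \<times> C)" unfolding M_def by auto
  then have fin: "finite M" using C_fin by (meson finite_SigmaI finite_imageI finite_subset)
  obtain c where c: "c \<in> C" "c \<noteq> 0" using nonzero_cw assms(2) by blast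
  then have ne: "M \<noteq> {}" unfolding M_def using C_zero by blast
  have "\<forall>d\<in>M. 4 \<le> d"
  proof
    fix d assume "d \<in> M"
    then obtain c c' where cc: "c \<in> C" "c' \<in> C" "c \<noteq> c'" "d = hamming n c c'" unfolding M_def by auto
    have "c - c' \<in> C" using cc unfolding C_eq by (auto simp: words_diff syn_diff)
    moreover have "c - c' \<noteq> 0" using cc by simp
    ultimately show "4 \<le> d" using weight4[OF assms(1)] cc(4) by (simp add: hamming_supp)
  qed
  then show ?thesis unfolding min_distance_def M_def[symmetric] using fin ne by simp
qed

end

theorem proposition5p1:
  fixes K :: "('a::{field,finite} ^ 3) set set"
    and v k q s n mu :: nat
  assumes "CARD('a) = q" and "q = 2 ^ v"
    and "s = 2 ^ k" and "1 \<le> k" and "k \<le> v"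
    and "n = (s - 1) * q + s"
    and "maximal_arc K n s"
    and "mu = ((s - 1) * n) div 2"
  shows "optimal_saturating_1_mu K mu n \<and>
    (\<forall>h::nat \<Rightarrow> 'a ^ 3. corresponds n h K \<longrightarrow>
       (let C = parity_code n h in
          code_dim C = n - 3 \<and> covering_radius n C = 2 \<and>
          (s = 2 \<longrightarrow> PMCF n C 2 mu) \<and> (s \<ge> 4 \<longrightarrow> APMCF n C 2 mu)))"
proof -
  note arc = assms(7)
  have "(2::nat) ^ 1 \<le> 2 ^ k" using assms(4) by (rule power_increasing) simp
  then have s2: "2 \<le> s" using assms(3) by simp
  have "(2::nat) ^ k \<le> 2 ^ v" using assms(5) by (rule power_increasing) simp
  then have sq: "s \<le> CARD('a)" using assms(1,2,3) by simp
  have ev: "even s" using assms(3,4) by simp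
  have q2: "2 \<le> q" using s2 sq assms(1) by linarith
  have "1 \<le> s - 1" using s2 by linarith
  then have "1 * 2 \<le> (s - 1) * q" using q2 by (rule mult_le_mono)
  then have sn: "s < n" and n4: "4 \<le> n" using assms(6) s2 by linarith+
  have Kp: "K \<subseteq> pg_points" "finite K" "card K = n" using arc unfolding maximal_arc_def by auto
  have Kne: "K \<noteq> {}" using Kp sn by auto
  have sat_eq: "\<forall>Q\<in>pg_points - K. secant_mult K Q = mu"
  proof
    fix Q assume Q: "Q \<in> pg_points - K"
    define L where "L = {l\<in>pg_lines. Q \<in> l \<and> card (l \<inter> K) \<ge> 2}"
    have "card L * s = n" "secant_mult K Q = card L * (s choose 2)"
      using sat_count[OF arc s2, of Q] Q unfolding L_def by auto
    then show "secant_mult K Q = mu" using mu_arith[OF ev] assms(8) by simp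
  qed
  have part1: "optimal_saturating_1_mu K mu n"
    unfolding optimal_saturating_1_mu_def saturating_1_mu_def
    using Kp arc_spans[OF arc s2 Kne] arc_ne[OF arc sq] sat_eq by auto
  have part2: "corresponds n h K \<Longrightarrow>
       (let C = parity_code n h in
          code_dim C = n - 3 \<and> covering_radius n C = 2 \<and>
          (s = 2 \<longrightarrow> PMCF n C 2 mu) \<and> (s \<ge> 4 \<longrightarrow> APMCF n C 2 mu))" for h
  proof -
    assume corr: "corresponds n h K"
    interpret cs K n s h using arc s2 sq corr sn by unfold_locales
    have ap: "APMCF n C 2 mu"
      unfolding APMCF_def
    proof (intro conjI ballI impI)
      show "covering_radius n C = 2" by (rule covrad)
      fix x assume x: "x \<in> words n" "dist_to_code n C x = 2"
      then have "syn n h x \<noteq> 0" "pg_point (syn n h x) \<notin> K" using dist2_iff by auto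
      then show "card {c \<in> C. hamming n x c = 2} = mu" using count[OF x(1) _ _ ev] assms(8) by simp
    qed
    have "code_dim C = n - 3" by (rule dimC)
    moreover have "s = 2 \<longrightarrow> PMCF n C 2 mu" unfolding PMCF_def using ap mindist n4 by auto
    ultimately show ?thesis using ap covrad unfolding C_def Let_def by auto
  qed
  show ?thesis using part1 part2 by blast
qed

end
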